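(* Let $f:\{0,1\}^n\to\{0,1\}$ be a non-constant zebra function with $\operatorname{alt}(f)=k$ for some $k\ge1$. Then \[C(f)\le O\!\left(\operatorname{alt}(f)\max\{\mathsf N(f)^2,\mathsf N(\overline f)^2\}\right).\]
   Context: $\mathsf N(f)$ is the minimum degree of a real polynomial $p$ with $|p(x)|\le1/3$ whenever $f(x)=0$ and $|p(x)|\ge1$ whenever $f(x)=1$; $\overline f=1-f$. A monotone path is a sequence $x^{(1)},\dots,x^{(m)}\in\{0,1\}^n$ where each $x^{(i+1)}$ is obtained from $x^{(i)}$ by changing exactly one coordinate from $0$ to $1$. Its alternation number (w.r.t. $f$) is the number of $i$ with $f(x^{(i)})\ne f(x^{(i+1)})$. $\operatorname{alt}(f)$ is the maximum alternation number over monotone paths from $0^n$ to $1^n$. $f$ is a zebra function if all monotone paths from $0^n$ to $1^n$ have the same alternation number. $C(f)$ is the certificate complexity of $f$. Constants in $O(\cdot)$ are absolute. *)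

theory Defs
  imports Complex_Main
begin

text \<open>Points of the Boolean cube {0,1}^n are represented by the set of coordinates
  (among 0..n-1) equal to 1. A Boolean function is f :: nat set => bool
  (only its values on the cube matter).\<close>

definition cube :: "nat \<Rightarrow> nat set set" where
  "cube n = Pow {..<n}"

definition poly_deg_le :: "nat \<Rightarrow> nat \<Rightarrow> (nat set \<Rightarrow> real) \<Rightarrow> bool" where
  "poly_deg_le n d p \<longleftrightarrow> (\<exists>c :: nat set \<Rightarrow> real. \<forall>x\<in>cube n.
      p x = (\<Sum>S\<in>{S. S \<subseteq> {..<n} \<and> card S \<le> d}. c S * (\<Prod>i\<in>S. if i \<in> x then 1 else 0)))"

definition Ndeg :: "nat \<Rightarrow> (nat set \<Rightarrow> bool) \<Rightarrow> nat" where
  "Ndeg n f = (LEAST d. \<exists>p. poly_deg_le n d p \<and>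
      (\<forall>x\<in>cube n. (\<not> f x \<longrightarrow> \<bar>p x\<bar> \<le> 1/3) \<and> (f x \<longrightarrow> \<bar>p x\<bar> \<ge> 1)))"

definition cert_at :: "nat \<Rightarrow> (nat set \<Rightarrow> bool) \<Rightarrow> nat set \<Rightarrow> nat" where
  "cert_at n f x = (LEAST k. \<exists>S. S \<subseteq> {..<n} \<and> card S = k \<and>
      (\<forall>y\<in>cube n. (\<forall>i\<in>S. (i \<in> y \<longleftrightarrow> i \<in> x)) \<longrightarrow> f y = f x))"

definition cert :: "nat \<Rightarrow> (nat set \<Rightarrow> bool) \<Rightarrow> nat" where
  "cert n f = Max (cert_at n f ` cube n)"

definition mono_path :: "nat \<Rightarrow> nat set list \<Rightarrow> bool" where
  "mono_path n xs \<longleftrightarrow> xs \<noteq> [] \<and> hd xs = {} \<and> last xs = {..<n} \<and>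
     (\<forall>i. Suc i < length xs \<longrightarrow>
        (\<exists>a. a < n \<and> a \<notin> xs ! i \<and> xs ! Suc i = insert a (xs ! i)))"

definition alt_num :: "(nat set \<Rightarrow> bool) \<Rightarrow> nat set list \<Rightarrow> nat" where
  "alt_num f xs = card {i. Suc i < length xs \<and> f (xs ! i) \<noteq> f (xs ! Suc i)}"

definition alt :: "nat \<Rightarrow> (nat set \<Rightarrow> bool) \<Rightarrow> nat" where
  "alt n f = Max {alt_num f xs | xs. mono_path n xs}"

definition zebra :: "nat \<Rightarrow> (nat set \<Rightarrow> bool) \<Rightarrow> bool" where
  "zebra n f \<longleftrightarrow> (\<forall>xs ys. mono_path n xs \<and> mono_path n ys \<longrightarrow> alt_num f xs = alt_num f ys)"

end

theory Submission
  imports Defs "HOL-Computational_Algebra.Polynomial"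
begin


fun cheb :: "nat \<Rightarrow> real poly" where
  "cheb 0 = 1"
| "cheb (Suc 0) = [:0,1:]"
| "cheb (Suc (Suc n)) = smult 2 [:0,1:] * cheb (Suc n) - cheb n"

lemma cheb_degree: "degree (cheb n) \<le> n"
proof (induction n rule: cheb.induct)
  case (3 n)
  have "degree (smult 2 [:0,1:] * cheb (Suc n)) \<le> Suc (Suc n)"
    by (rule order.trans[OF degree_mult_le]) (use 3 in auto)
  then show ?case
    using 3 by (auto intro!: degree_diff_le)
qed auto

lemma cheb_cos: "poly (cheb n) (cos t) = cos (real n * t)"
proof (induction n rule: cheb.induct)
  case (3 n)
  have "cos (real (Suc (Suc n)) * t) = 2 * cos t * cos (real (Suc n) * t) - cos (real n * t)"
  proof -
    have a: "real (Suc (Suc n)) * t = real (Suc n) * t + t" by (simp add: algebra_simps)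
    have b: "real n * t = real (Suc n) * t - t" by (simp add: algebra_simps)
    show ?thesis unfolding a b cos_add cos_diff by simp
  qed
  then show ?case using 3 by simp
qed auto

lemma cheb_closed:
  assumes "a * b = 1" "a + b = 2 * y"
  shows "poly (cheb n) y = (a ^ n + b ^ n) / 2"
proof (induction n rule: cheb.induct)
  case (3 n)
  have "a ^ Suc (Suc n) + b ^ Suc (Suc n) = (a + b) * (a ^ Suc n + b ^ Suc n) - (a*b) * (a^n + b^n)"
    by (simp add: algebra_simps)
  then show ?case using 3 assms by simp
qed (use assms in auto)

lemma lagrange:
  fixes q :: "real poly" and x :: "nat \<Rightarrow> real"
  assumes deg: "degree q \<le> d" and inj: "inj_on x {..d}"
  shows "poly q z = (\<Sum>j\<le>d. poly q (x j) * (\<Prod>i\<in>{..d}-{j}. (z - x i) / (x j - x i)))"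
proof -
  define B where "B j = smult (1 / (\<Prod>i\<in>{..d}-{j}. (x j - x i))) (\<Prod>i\<in>{..d}-{j}. [:- x i, 1:])" for j
  have polyB: "poly (B j) w = (\<Prod>i\<in>{..d}-{j}. (w - x i) / (x j - x i))" for j w
    by (simp add: B_def poly_prod prod_dividef)
  have degB: "degree (B j) \<le> d" if "j \<le> d" for j
  proof -
    have "degree (\<Prod>i\<in>{..d}-{j}. [:- x i, 1:]) \<le> (\<Sum>i\<in>{..d}-{j}. degree [:- x i, 1:])"
      by (rule degree_prod_sum_le[simplified comp_def]) simp
    also have "\<dots> = card ({..d}-{j})" by simp
    also have "\<dots> = d" using that by simp
    finally show ?thesis unfolding B_def by simp
  qed
  define r where "r = q - (\<Sum>j\<le>d. smult (poly q (x j)) (B j))"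
  have degr: "degree r \<le> d"
    unfolding r_def
    by (rule order.trans[OF degree_diff_le]) (auto intro!: degree_sum_le order.trans[OF degree_smult_le] degB deg)
  have Bval: "poly (B j) (x k) = (if j = k then 1 else 0)" if "j \<le> d" "k \<le> d" for j k
  proof (cases "j = k")
    case True
    have "(x j - x i) / (x j - x i) = 1" if "i \<in> {..d}-{j}" for i
      using inj that \<open>j \<le> d\<close> by (auto simp: inj_on_def)
    then show ?thesis using True by (simp add: polyB)
  next
    case False
    then have "k \<in> {..d}-{j}" using that by auto
    then have "(\<Prod>i\<in>{..d}-{j}. (x k - x i) / (x j - x i)) = 0"
      by (intro prod_zero) auto
    then show ?thesis using False unfolding polyB by simp
  qed
  have root: "poly r (x k) = 0" if "k \<le> d" for k
  proof -
    have "(\<Sum>j\<le>d. poly q (x j) * poly (B j) (x k)) = (\<Sum>j\<le>d. if j = k then poly q (x k) else 0)"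
      by (rule sum.cong) (auto simp: Bval that)
    also have "\<dots> = poly q (x k)" using that by simp
    finally show ?thesis by (simp add: r_def poly_sum)
  qed
  have "r = 0"
  proof (rule ccontr)
    assume "r \<noteq> 0"
    then have "card {w. poly r w = 0} \<le> degree r" by (rule card_poly_roots_bound)
    moreover have "x ` {..d} \<subseteq> {w. poly r w = 0}" using root by auto
    then have "card (x ` {..d}) \<le> card {w. poly r w = 0}"
      using poly_roots_finite[OF \<open>r \<noteq> 0\<close>] by (intro card_mono) auto
    moreover have "card (x ` {..d}) = Suc d" using card_image[OF inj] by simp
    ultimately show False using degr by simp
  qed
  then have "q = (\<Sum>j\<le>d. smult (poly q (x j)) (B j))" unfolding r_def by simp
  then have "poly q z = poly (\<Sum>j\<le>d. smult (poly q (x j)) (B j)) z" by simp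
  then show ?thesis by (simp add: poly_sum polyB)
qed



lemma sin_lower: assumes "0 \<le> x" "x \<le> 1" shows "x/2 \<le> sin (x::real)"
proof -
  have "\<bar>sin x - (\<Sum>m<3. sin_coeff m * x ^ m)\<bar> \<le> inverse (fact 3) * \<bar>x\<bar> ^ 3"
    by (rule Maclaurin_sin_bound)
  moreover have "(\<Sum>m<3. sin_coeff m * x ^ m) = x"
    by (simp add: numeral_3_eq_3 sin_coeff_def)
  moreover have "\<bar>x\<bar>^3 \<le> x"
  proof -
    have "x*x \<le> 1" using assms mult_le_one by auto
    then have "x*x*x \<le> 1*x" using assms by (intro mult_right_mono) auto
    then show ?thesis using assms by (simp add: power3_eq_cube)
  qed
  ultimately have "\<bar>sin x - x\<bar> * 6 \<le> x" by (simp add: fact_numeral)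
  moreover have "x - sin x \<le> \<bar>sin x - x\<bar>" by simp
  ultimately have a: "\<bar>sin x - x\<bar> * 6 \<le> x" "x - sin x \<le> \<bar>sin x - x\<bar>" by auto
  define A where "A = \<bar>sin x - x\<bar>"
  have "A * 6 \<le> x" "x - sin x \<le> A" using a unfolding A_def by auto
  then show ?thesis using assms by linarith
qed

lemma prod_neg_lessThan: "(\<Prod>i<j. - f i) = (-1)^j * (\<Prod>i<j. (f i :: real))"
  by (induct j) auto

lemma cheb_bound:
  fixes m L :: nat
  assumes m1: "1 \<le> m" and L: "200 * m^2 \<le> L"
  shows "poly (cheb m) (1 + 2 / real L) \<le> 7/6"
proof -
  define y where "y = 1 + 2 / real L"
  define s where "s = sqrt (y^2 - 1)"
  have Lr: "200 * real m ^ 2 \<le> real L" using L by (metis of_nat_le_iff of_nat_mult of_nat_numeral of_nat_power)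
  have m1r: "1 \<le> real m" using m1 by simp
  have mm: "1 \<le> real m ^ 2" using m1r by (simp add: one_le_power)
  have Lpos: "200 \<le> real L" using Lr mm by linarith
  have y1: "1 \<le> y" unfolding y_def using Lpos by simp
  have s0: "0 \<le> s" unfolding s_def using y1 by simp
  have ss: "s^2 = y^2 - 1" unfolding s_def using y1 by (simp add: one_le_power)
  define a where "a = y + s"
  define b where "b = y - s"
  have ab: "a * b = 1" unfolding a_def b_def using ss by (simp add: algebra_simps power2_eq_square)
  have apb: "a + b = 2 * y" unfolding a_def b_def by simp
  have a1: "1 \<le> a" unfolding a_def using y1 s0 by simp
  have binv: "b = 1 / a" using ab a1 by (simp add: field_simps mult.commute)
  have b0: "0 < b" using binv a1 by simp
  have b1: "b \<le> 1" using binv a1 by simp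
  have bm: "b ^ m \<le> 1" using b0 b1 by (simp add: power_le_one)
  have s2: "s^2 \<le> (1 / (5 * real m))^2"
  proof -
    have "s^2 = 4 / real L + 4 / (real L)^2" unfolding ss y_def using Lpos
      by (simp add: power2_eq_square field_simps)
    also have "\<dots> \<le> 8 / real L"
    proof -
      have "4 / (real L)^2 \<le> 4 / real L" using Lpos
        by (intro divide_left_mono) (auto simp: power2_eq_square)
      then show ?thesis by simp
    qed
    also have "\<dots> \<le> 8 / (200 * real m ^ 2)" using Lr mm Lpos m1 by (intro divide_left_mono) (auto intro!: mult_pos_pos)
    also have "\<dots> \<le> (1 / (5 * real m))^2" using m1r by (simp add: power2_eq_square field_simps)
    finally show ?thesis .
  qed
  have sb: "s \<le> 1 / (5 * real m)" by (rule power2_le_imp_le[OF s2]) (use m1r in simp)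
  have tb: "2 / real L \<le> 1 / (100 * real m)"
  proof -
    have "2 / real L \<le> 2 / (200 * real m ^ 2)" using Lr mm Lpos m1 by (intro divide_left_mono) (auto intro!: mult_pos_pos)
    also have "\<dots> \<le> 1 / (100 * real m)" using m1r by (simp add: power2_eq_square field_simps)
    finally show ?thesis .
  qed
  define u where "u = a - 1"
  have u0: "0 \<le> u" unfolding u_def using a1 by simp
  have mu: "real m * u \<le> 1/4"
  proof -
    have "u = 2 / real L + s" unfolding u_def a_def y_def by simp
    also have "\<dots> \<le> 1 / (100 * real m) + 1 / (5 * real m)" using tb sb by simp
    finally have "real m * u \<le> real m * (1 / (100 * real m) + 1 / (5 * real m))"
      using m1r by (intro mult_left_mono) auto
    also have "\<dots> = 21/100" using m1r by (simp add: field_simps)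
    finally show ?thesis by simp
  qed
  have u1: "u \<le> 1/4"
  proof -
    have "u \<le> real m * u" using m1r u0 by (simp add: mult_le_cancel_right1)
    then show ?thesis using mu by linarith
  qed
  have bern: "1 - real m * u \<le> (1 - u) ^ m"
    using Bernoulli_inequality[of "- u" m] u1 by simp
  have prod1: "a ^ m * (1 - u) ^ m \<le> 1"
  proof -
    have e: "a * (1 - u) = 1 - u^2" unfolding u_def by (simp add: power2_eq_square algebra_simps)
    have "a ^ m * (1 - u) ^ m = (1 - u^2) ^ m" by (simp only: power_mult_distrib[symmetric] e)
    also have "\<dots> \<le> 1" using u0 u1 by (intro power_le_one) (auto simp: power2_eq_square mult_le_one)
    finally show ?thesis .
  qed
  have am: "a ^ m \<le> 4/3"
  proof -
    have pos: "3/4 \<le> (1 - u) ^ m" using bern mu by linarith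
    have "a ^ m * (3/4) \<le> a ^ m * (1 - u) ^ m" using pos a1 by (intro mult_left_mono) auto
    then have "a ^ m * (3/4) \<le> 1" using prod1 by linarith
    then show ?thesis by simp
  qed
  have "poly (cheb m) y = (a ^ m + b ^ m) / 2" by (rule cheb_closed[OF ab apb])
  also have "\<dots> \<le> 7/6" using am bm by simp
  finally show ?thesis unfolding y_def .
qed



lemma cos_near:
  fixes e :: real assumes "\<bar>e\<bar> \<le> pi/3"
  shows "1/2 \<le> cos e"
proof -
  have "cos (pi/3) \<le> cos \<bar>e\<bar>" using assms by (intro cos_monotone_0_pi_le) auto
  then show ?thesis by (simp add: cos_60)
qed

lemma cos_alt:
  fixes t :: real and j :: nat
  assumes "\<bar>t - real j * pi\<bar> \<le> pi/3"
  shows "1/2 \<le> (-1)^j * cos t"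
proof -
  have "cos t = cos ((t - real j * pi) + real j * pi)" by simp
  also have "\<dots> = cos (t - real j * pi) * (-1)^j"
    by (simp only: cos_add sin_npi cos_npi) simp?
  finally have "(-1)^j * cos t = cos (t - real j * pi)"
    by (simp add: mult.commute[of _ "(-1)^j"] power_mult_distrib[symmetric] flip: power_add)
  then show ?thesis using cos_near[OF assms] by simp
qed

lemma sin_mid:
  fixes lo hh :: real
  assumes "0 \<le> lo" "0 < hh" "lo + hh \<le> pi"
  shows "sin (hh/2) \<le> sin (lo + hh/2)"
proof (cases "lo + hh/2 \<le> pi/2")
  case True
  then show ?thesis using assms by (intro sin_monotone_2pi_le) auto
next
  case False
  have "sin (hh/2) \<le> sin (pi - (lo + hh/2))" using assms False by (intro sin_monotone_2pi_le) auto
  then show ?thesis by simp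
qed

lemma univ:
  fixes h :: "real poly" and m L :: nat
  assumes m1: "1 \<le> m" and deg: "degree h \<le> m" and L: "200 * m^2 \<le> L"
    and bnd: "\<forall>t\<le>L. \<bar>poly h (real t)\<bar> \<le> 1/3"
  shows "\<bar>poly h (real L + 1)\<bar> < 1"
proof -
  have Lr: "200 * real m ^ 2 \<le> real L" using L by (metis of_nat_le_iff of_nat_mult of_nat_numeral of_nat_power)
  have m1r: "1 \<le> real m" using m1 by simp
  have mm: "1 \<le> real m ^ 2" using m1r by (simp add: one_le_power)
  have Lpos: "200 \<le> real L" using Lr mm by linarith
  define hh where "hh = pi / (3 * real m)"
  have hh0: "0 < hh" unfolding hh_def using m1r by simp
  have hhpi: "hh * real m = pi / 3" unfolding hh_def using m1r by simp
  define lo where "lo j = (if j = 0 then 0 else real j * pi / real m - hh)" for j :: nat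
  have lo_ge: "0 \<le> lo j" if "j \<le> m" for j
  proof (cases "j = 0")
    case False
    then have "1 \<le> real j" by simp
    then have "pi / real m \<le> real j * pi / real m" using m1r by (simp add: divide_right_mono)
    moreover have "hh \<le> pi / real m" unfolding hh_def using m1r by (intro frac_le) auto
    ultimately show ?thesis unfolding lo_def using False by simp
  qed (simp add: lo_def)
  have lo_le: "lo j + hh \<le> pi" if "j \<le> m" for j
  proof (cases "j = 0")
    case True
    have "hh \<le> pi / 1" unfolding hh_def using m1r by (intro frac_le) auto
    then show ?thesis using True by (simp add: lo_def)
  next
    case False
    have "real j * pi / real m \<le> pi" using that m1r by (simp add: field_simps)
    then show ?thesis unfolding lo_def using False by simp
  qed
  have gap: "lo j + hh < lo j'" if "j < j'" for j j'
  proof -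
    have j'0: "j' \<noteq> 0" using that by simp
    have "real j + 1 \<le> real j'" using that by simp
    then have "(real j + 1) * pi / real m \<le> real j' * pi / real m" using m1r
      by (intro divide_right_mono mult_right_mono) auto
    moreover have "pi / real m = 3 * hh" unfolding hh_def using m1r by simp
    moreover have "(real j + 1) * pi / real m = real j * pi / real m + pi / real m" by (simp add: add_divide_distrib distrib_right)
    moreover have "0 \<le> real j * pi / real m" using m1r by simp
    ultimately show ?thesis unfolding lo_def using j'0 hh0 by auto
  qed
  define \<phi> where "\<phi> t = real L * (1 + cos t) / 2" for t
  have len: "\<phi> (lo j + hh) + 1 \<le> \<phi> (lo j)" if "j \<le> m" for j
  proof -
    have diff: "cos (lo j) - cos (lo j + hh) = 2 * sin (lo j + hh/2) * sin (hh/2)"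
      by (simp add: cos_diff_cos field_simps)
    have mid: "sin (hh/2) \<le> sin (lo j + hh/2)" by (rule sin_mid[OF lo_ge[OF that] hh0 lo_le[OF that]])
    have sh: "hh/2/2 \<le> sin (hh/2)"
    proof (rule sin_lower)
      show "0 \<le> hh/2" using hh0 by simp
      have "hh \<le> pi/3" unfolding hh_def using m1r by (intro frac_le) auto
      then show "hh/2 \<le> 1" using pi_less_4 by simp
    qed
    have q1: "(hh/4) * (hh/4) \<le> sin (hh/2) * sin (hh/2)"
      using sh hh0 by (intro mult_mono) auto
    have q2: "sin (hh/2) * sin (hh/2) \<le> sin (lo j + hh/2) * sin (hh/2)"
      using mid sh hh0 by (intro mult_right_mono) auto
    have c: "2 * (hh/4)^2 \<le> cos (lo j) - cos (lo j + hh)"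
      unfolding diff power2_eq_square using q1 q2 by linarith
    have "hh * real m \<ge> 2/3" using hhpi pi_ge_two by simp
    then have "(2/3)^2 \<le> (hh * real m)^2" by (intro power_mono) auto
    then have "(hh * real m)^2 \<ge> 4/9" by (simp add: power2_eq_square)
    then have "real L * (2 * (hh/4)^2) \<ge> 200 * real m ^2 * (2 * (hh/4)^2)"
      using Lr by (intro mult_right_mono) auto
    moreover have "200 * real m ^2 * (2 * (hh/4)^2) = 25 * (hh * real m)^2"
      by (simp add: power2_eq_square field_simps)
    ultimately have "real L * (2 * (hh/4)^2) \<ge> 2" using \<open>(hh * real m)^2 \<ge> 4/9\<close> by linarith
    moreover have "real L * (2 * (hh/4)^2) \<le> real L * (cos (lo j) - cos (lo j + hh))"
      using c by (intro mult_left_mono) auto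
    ultimately show ?thesis unfolding \<phi>_def by (simp add: field_simps)
  qed
  define xr where "xr j = ceiling (\<phi> (lo j + hh))" for j
  have exth: "\<exists>t. lo j \<le> t \<and> t \<le> lo j + hh \<and> \<phi> t = of_int (xr j)" if "j \<le> m" for j
  proof (rule IVT2)
    show "\<phi> (lo j + hh) \<le> of_int (xr j)" unfolding xr_def by simp
    show "of_int (xr j) \<le> \<phi> (lo j)" using len[OF that] unfolding xr_def by linarith
    show "lo j \<le> lo j + hh" using hh0 by simp
    show "\<forall>t. lo j \<le> t \<and> t \<le> lo j + hh \<longrightarrow> isCont \<phi> t" unfolding \<phi>_def by (auto intro!: continuous_intros)
  qed
  obtain th where th: "\<And>j. j \<le> m \<Longrightarrow> lo j \<le> th j \<and> th j \<le> lo j + hh \<and> \<phi> (th j) = of_int (xr j)"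
    using exth by metis
  define x where "x j = \<phi> (th j)" for j
  define tn where "tn j = nat (xr j)" for j
  have xr0: "0 \<le> xr j" for j
  proof -
    have "0 \<le> 1 + cos (lo j + hh)" using cos_ge_minus_one[of "lo j + hh"] by linarith
    then have "0 \<le> \<phi> (lo j + hh)" unfolding \<phi>_def using Lpos by simp
    then show ?thesis unfolding xr_def by simp
  qed
  have x_tn: "x j = real (tn j)" if "j \<le> m" for j
    using th[OF that] xr0[of j] unfolding x_def tn_def by simp
  have tn_le: "tn j \<le> L" if "j \<le> m" for j
  proof -
    have "real L * (1 + cos (th j)) \<le> real L * 2" by (intro mult_left_mono) auto
    then have "\<phi> (th j) \<le> real L" unfolding \<phi>_def by simp
    then have "real (tn j) \<le> real L" using x_tn[OF that] unfolding x_def by simp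
    then show ?thesis by simp
  qed
  have xdec: "x j' < x j" if "j < j'" "j' \<le> m" for j j'
  proof -
    have "th j < th j'" using th[of j] th[of j'] that gap[OF that(1)] by force
    moreover have "0 \<le> th j" using th[of j] lo_ge[of j] that by force
    moreover have "th j' \<le> pi" using th[of j'] lo_le[of j'] that by force
    ultimately have "cos (th j') < cos (th j)" by (intro cos_monotone_0_pi) auto
    then show ?thesis unfolding x_def \<phi>_def using Lpos by (simp add: field_simps)
  qed
  have inj: "inj_on x {..m}"
  proof (rule inj_onI)
    fix i j assume "i \<in> {..m}" "j \<in> {..m}" "x i = x j"
    then show "i = j" using xdec[of i j] xdec[of j i] by (cases i j rule: linorder_cases) auto
  qed
  define P where "P = smult 2 (pcompose (cheb m) [:-1, 2 / real L:])"
  have degP: "degree P \<le> m"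
  proof -
    have d1: "degree [:-1, 2 / real L:] \<le> 1" by (simp add: degree_pCons_eq_if)
    have "degree (pcompose (cheb m) [:-1, 2 / real L:]) \<le> m * 1"
      unfolding degree_pcompose using cheb_degree[of m] d1 by (rule mult_le_mono)
    then show ?thesis unfolding P_def using degree_smult_le order_trans by (metis mult_1_right)
  qed
  have polyP: "poly P w = 2 * poly (cheb m) (-1 + w * (2 / real L))" for w
    unfolding P_def by (simp add: poly_pcompose)
  have Pnode: "1 \<le> (-1)^j * poly P (x j)" if "j \<le> m" for j
  proof -
    have "-1 + x j * (2 / real L) = cos (th j)" unfolding x_def \<phi>_def using Lpos by (simp add: field_simps)
    then have "poly P (x j) = 2 * cos (real m * th j)" by (simp add: polyP cheb_cos)
    moreover have "\<bar>real m * th j - real j * pi\<bar> \<le> pi/3"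
    proof (cases "j = 0")
      case True
      then have "0 \<le> th j" "th j \<le> hh" using th[OF that] by (auto simp: lo_def)
      moreover have "real m * th j \<le> real m * hh" using \<open>th j \<le> hh\<close> by (intro mult_left_mono) auto
      moreover have "0 \<le> real m * th j" using \<open>0 \<le> th j\<close> by simp
      ultimately show ?thesis using True hhpi by (simp add: mult.commute)
    next
      case False
      then have a: "real j * pi / real m - hh \<le> th j" "th j \<le> real j * pi / real m" using th[OF that] by (auto simp: lo_def)
      have "real m * (real j * pi / real m - hh) \<le> real m * th j" using a(1) by (intro mult_left_mono) auto
      moreover have "real m * th j \<le> real m * (real j * pi / real m)" using a(2) by (intro mult_left_mono) auto
      moreover have "real m * (real j * pi / real m - hh) = real j * pi - pi/3"
        using hhpi m1r by (simp add: field_simps)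
      moreover have "real m * (real j * pi / real m) = real j * pi" using m1r by simp
      ultimately show ?thesis by (simp add: abs_if)
    qed
    then have "1/2 \<le> (-1)^j * cos (real m * th j)" by (rule cos_alt)
    ultimately show ?thesis by simp
  qed
  define z where "z = real L + 1"
  define w where "w j = (\<Prod>i\<in>{..m}-{j}. (z - x i) / (x j - x i))" for j
  have wsign: "0 \<le> (-1)^j * w j" if "j \<le> m" for j
  proof -
    have split: "{..m}-{j} = {..<j} \<union> {j<..m}" using that by auto
    have w_eq: "w j = (\<Prod>i<j. (z - x i) / (x j - x i)) * (\<Prod>i\<in>{j<..m}. (z - x i) / (x j - x i))"
      unfolding w_def split by (rule prod.union_disjoint) auto
    have zx: "x i < z" if "i \<le> m" for i
      using x_tn[OF that] tn_le[OF that] unfolding z_def by simp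
    have "(-1)^j * (\<Prod>i<j. (z - x i) / (x j - x i)) = (\<Prod>i<j. - ((z - x i) / (x j - x i)))"
      by (simp add: prod_neg_lessThan)
    also have "\<dots> \<ge> 0"
    proof (rule prod_nonneg)
      fix i assume "i \<in> {..<j}"
      then have "x j < x i" "x i < z" using xdec[of i j] zx[of i] that by auto
      then show "0 \<le> - ((z - x i) / (x j - x i))" by (simp add: divide_nonneg_neg)
    qed
    finally have A: "0 \<le> (-1)^j * (\<Prod>i<j. (z - x i) / (x j - x i))" .
    have B: "0 \<le> (\<Prod>i\<in>{j<..m}. (z - x i) / (x j - x i))"
    proof (rule prod_nonneg)
      fix i assume "i \<in> {j<..m}"
      then have "x i < x j" "x i < z" using xdec[of j i] zx[of i] by auto
      then show "0 \<le> (z - x i) / (x j - x i)" by simp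
    qed
    show ?thesis unfolding w_eq using A B by (simp add: mult.assoc[symmetric])
  qed
  have wP: "\<bar>w j\<bar> \<le> w j * poly P (x j)" if "j \<le> m" for j
  proof -
    have "\<bar>(-1)^j * w j\<bar> = \<bar>w j\<bar>" by (simp add: abs_mult)
    then have "\<bar>w j\<bar> = (-1)^j * w j" using wsign[OF that] by simp
    also have "\<dots> \<le> ((-1)^j * w j) * ((-1)^j * poly P (x j))"
      using wsign[OF that] Pnode[OF that] by (simp add: mult_le_cancel_left1)
    also have "\<dots> = w j * poly P (x j)"
    proof -
      have e: "(-1::real)^j * (-1)^j = 1" by (simp flip: power_mult_distrib)
      have "((-1)^j * w j) * ((-1)^j * poly P (x j)) = ((-1::real)^j * (-1)^j) * (w j * poly P (x j))"
        by (simp only: mult_ac)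
      then show ?thesis using e by simp
    qed
    finally show ?thesis .
  qed
  have lagP: "poly P z = (\<Sum>j\<le>m. poly P (x j) * w j)"
    unfolding w_def by (rule lagrange[OF degP inj])
  have lagh: "poly h z = (\<Sum>j\<le>m. poly h (x j) * w j)"
    unfolding w_def by (rule lagrange[OF deg inj])
  have "\<bar>poly h z\<bar> \<le> (\<Sum>j\<le>m. \<bar>poly h (x j) * w j\<bar>)" unfolding lagh by (rule sum_abs)
  also have "\<dots> \<le> (\<Sum>j\<le>m. (1/3) * \<bar>w j\<bar>)"
  proof (rule sum_mono)
    fix j assume "j \<in> {..m}"
    then have "\<bar>poly h (x j)\<bar> \<le> 1/3" using bnd x_tn tn_le by auto
    then have "\<bar>poly h (x j)\<bar> * \<bar>w j\<bar> \<le> 1/3 * \<bar>w j\<bar>" by (intro mult_right_mono) auto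
    then show "\<bar>poly h (x j) * w j\<bar> \<le> 1/3 * \<bar>w j\<bar>" by (simp add: abs_mult)
  qed
  also have "\<dots> \<le> (\<Sum>j\<le>m. (1/3) * (w j * poly P (x j)))"
    by (rule sum_mono) (use wP in auto)
  also have "\<dots> = (1/3) * poly P z" unfolding lagP by (simp add: sum_distrib_left mult.commute)
  also have "poly P z = 2 * poly (cheb m) (1 + 2 / real L)"
    unfolding polyP z_def using Lpos by (simp add: field_simps)
  also have "(1/3) * (2 * poly (cheb m) (1 + 2 / real L)) \<le> (1/3) * (2 * (7/6))"
    using cheb_bound[OF m1 L] by simp
  finally show ?thesis unfolding z_def by simp
qed



lemma fall_choose: "(\<Prod>i<s. real x - real i) = real (x choose s) * fact s"
proof -
  have "real (x choose s) = (\<Prod>i=0..<s. real x - of_nat i) / fact s"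
    by (simp add: binomial_gbinomial gbinomial_prod_rev)
  then show ?thesis by (simp add: lessThan_atLeast0)
qed

lemma count_sup:
  assumes fin: "finite F" and TF: "T \<subseteq> F" and st: "card T \<le> t"
  shows "card {y. y \<subseteq> F \<and> card y = t \<and> T \<subseteq> y} = (card F - card T) choose (t - card T)"
proof -
  have finT: "finite T" using fin TF finite_subset by blast
  have eq: "{y. y \<subseteq> F \<and> card y = t \<and> T \<subseteq> y} = (\<lambda>y'. y' \<union> T) ` {y'. y' \<subseteq> F - T \<and> card y' = t - card T}"
  proof (rule set_eqI, rule iffI)
    fix y assume y: "y \<in> {y. y \<subseteq> F \<and> card y = t \<and> T \<subseteq> y}"
    then have fy: "finite y" using fin finite_subset by blast
    have "card (y - T) = t - card T" using y finT by (simp add: card_Diff_subset)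
    moreover have "y = (y - T) \<union> T" using y by auto
    ultimately show "y \<in> (\<lambda>y'. y' \<union> T) ` {y'. y' \<subseteq> F - T \<and> card y' = t - card T}"
      using y by (intro image_eqI[of _ _ "y - T"]) auto
  next
    fix y assume "y \<in> (\<lambda>y'. y' \<union> T) ` {y'. y' \<subseteq> F - T \<and> card y' = t - card T}"
    then obtain y' where y': "y' \<subseteq> F - T" "card y' = t - card T" "y = y' \<union> T" by auto
    have "finite y'" using y'(1) fin finite_subset by blast
    then have "card (y' \<union> T) = card y' + card T" using y' finT by (intro card_Un_disjoint) auto
    then have "card y = card y' + card T" using y'(3) by simp
    then show "y \<in> {y. y \<subseteq> F \<and> card y = t \<and> T \<subseteq> y}" using y' st TF by auto
  qed
  have inj: "inj_on (\<lambda>y'. y' \<union> T) {y'. y' \<subseteq> F - T \<and> card y' = t - card T}"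
    by (rule inj_onI) auto
  have "card {y. y \<subseteq> F \<and> card y = t \<and> T \<subseteq> y} = card {y'. y' \<subseteq> F - T \<and> card y' = t - card T}"
    unfolding eq by (rule card_image[OF inj])
  also have "\<dots> = card (F - T) choose (t - card T)" using fin by (intro n_subsets) auto
  also have "card (F - T) = card F - card T" using TF finT by (simp add: card_Diff_subset)
  finally show ?thesis .
qed

lemma count_fall:
  assumes fin: "finite F" and TF: "T \<subseteq> F" and tD: "t \<le> card F"
  shows "real (card {y. y \<subseteq> F \<and> card y = t \<and> T \<subseteq> y}) * (\<Prod>i<card T. real (card F) - real i)
       = real (card F choose t) * (\<Prod>i<card T. real t - real i)"
proof (cases "card T \<le> t")
  case True
  have sD: "card T \<le> card F" using True tD by simp
  have cm: "(card F choose t) * (t choose card T) = (card F choose card T) * ((card F - card T) choose (t - card T))"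
    by (rule choose_mult[OF True tD])
  show ?thesis
    unfolding count_sup[OF fin TF True] fall_choose
    using cm by (metis (no_types, lifting) mult.assoc mult.commute of_nat_mult)
next
  case False
  have e1: "{y. y \<subseteq> F \<and> card y = t \<and> T \<subseteq> y} = {}"
  proof -
    have "card T \<le> card y" if "y \<subseteq> F" "T \<subseteq> y" for y
      using that fin by (intro card_mono) (auto intro: finite_subset)
    then show ?thesis using False by auto
  qed
  have e2: "(\<Prod>i<card T. real t - real i) = 0"
    using False by (intro prod_zero) (auto intro!: bexI[of _ t])
  show ?thesis unfolding e1 e2 by simp
qed

lemma prod_ind:
  assumes "finite S"
  shows "(\<Prod>i\<in>S. (if i \<in> z then 1 else 0 :: real)) = (if S \<subseteq> z then 1 else 0)"
  using assms by (induction S rule: finite_induct) auto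

lemma sum_ind_card: "finite A \<Longrightarrow> (\<Sum>x\<in>A. if P x then 1 else 0 :: real) = real (card {x\<in>A. P x})"
  by (simp add: sum.inter_filter[symmetric])

definition Qp :: "nat \<Rightarrow> real poly" where
  "Qp s = (\<Prod>i<s. [:- real i, 1:])"

lemma Qp_poly: "poly (Qp s) x = (\<Prod>i<s. x - real i)"
  by (simp add: Qp_def poly_prod)

lemma Qp_degree: "degree (Qp s) \<le> s"
proof -
  have "degree (Qp s) \<le> (\<Sum>i<s. degree [:- real i, 1:])"
    unfolding Qp_def by (rule degree_prod_sum_le[simplified comp_def]) simp
  then show ?thesis by simp
qed

lemma sym_poly:
  assumes AF: "A \<inter> F = {}" "A \<union> F \<subseteq> {..<n}"
    and pd: "poly_deg_le n d p"
  shows "\<exists>h::real poly. degree h \<le> d \<and> (\<forall>t\<le>card F.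
     (\<Sum>y\<in>{y. y \<subseteq> F \<and> card y = t}. p (A \<union> y)) = real (card F choose t) * poly h (real t))"
proof -
  obtain c where c: "\<forall>x\<in>cube n. p x = (\<Sum>S\<in>{S. S \<subseteq> {..<n} \<and> card S \<le> d}. c S * (\<Prod>i\<in>S. if i \<in> x then 1 else 0))"
    using pd unfolding poly_deg_le_def by blast
  define SS where "SS = {S. S \<subseteq> {..<n} \<and> card S \<le> d}"
  have finSS: "finite SS" unfolding SS_def by simp
  have finF: "finite F" using AF(2) finite_subset by blast
  define D where "D = card F"
  define k where "k S = card (S \<inter> F)" for S
  define coef where "coef S = c S * (if S \<subseteq> A \<union> F then 1 else 0) / poly (Qp (k S)) (real D)" for S
  define h where "h = (\<Sum>S\<in>SS. smult (coef S) (Qp (k S)))"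
  have degh: "degree h \<le> d" unfolding h_def
  proof (rule degree_sum_le[OF finSS])
    fix S assume "S \<in> SS"
    then have S: "S \<subseteq> {..<n}" "card S \<le> d" unfolding SS_def by auto
    then have "finite S" using finite_subset by blast
    then have "k S \<le> card S" unfolding k_def by (intro card_mono) auto
    then have "k S \<le> d" using S by simp
    then show "degree (smult (coef S) (Qp (k S))) \<le> d"
      using Qp_degree[of "k S"] degree_smult_le[of "coef S" "Qp (k S)"] by simp
  qed
  have key: "(\<Sum>y\<in>{y. y \<subseteq> F \<and> card y = t}. p (A \<union> y)) = real (D choose t) * poly h (real t)"
    if tD: "t \<le> D" for t
  proof -
    define Y where "Y = {y. y \<subseteq> F \<and> card y = t}"
    have finY: "finite Y" unfolding Y_def using finF by simp
    have ind: "(\<Prod>i\<in>S. if i \<in> A \<union> y then 1 else 0 :: real)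
        = (if S \<subseteq> A \<union> F then 1 else 0) * (if S \<inter> F \<subseteq> y then 1 else 0)"
      if "S \<in> SS" "y \<in> Y" for S y
    proof -
      have "finite S" using that(1) unfolding SS_def using finite_subset by blast
      have iff: "S \<subseteq> A \<union> y \<longleftrightarrow> S \<subseteq> A \<union> F \<and> S \<inter> F \<subseteq> y" using that(2) AF(1) unfolding Y_def by auto
      have "(\<Prod>i\<in>S. if i \<in> A \<union> y then 1 else 0 :: real) = (if S \<subseteq> A \<union> y then 1 else 0)"
        by (rule prod_ind[OF \<open>finite S\<close>])
      then show ?thesis by (simp only: iff) simp
    qed
    have "(\<Sum>y\<in>Y. p (A \<union> y)) = (\<Sum>y\<in>Y. \<Sum>S\<in>SS. c S * ((if S \<subseteq> A \<union> F then 1 else 0) * (if S \<inter> F \<subseteq> y then 1 else 0)))"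
    proof (rule sum.cong[OF refl])
      fix y assume y: "y \<in> Y"
      then have "A \<union> y \<in> cube n" using AF unfolding Y_def cube_def by auto
      then show "p (A \<union> y) = (\<Sum>S\<in>SS. c S * ((if S \<subseteq> A \<union> F then 1 else 0) * (if S \<inter> F \<subseteq> y then 1 else 0)))"
        using c ind y unfolding SS_def by (auto intro!: sum.cong)
    qed
    also have "\<dots> = (\<Sum>S\<in>SS. c S * (if S \<subseteq> A \<union> F then 1 else 0) * real (card {y\<in>Y. S \<inter> F \<subseteq> y}))"
      by (subst sum.swap) (simp add: sum_distrib_left[symmetric] mult.assoc finY sum_ind_card)
    also have "\<dots> = (\<Sum>S\<in>SS. real (D choose t) * (coef S * poly (Qp (k S)) (real t)))"
    proof (rule sum.cong[OF refl])
      fix S assume S: "S \<in> SS"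
      have TF: "S \<inter> F \<subseteq> F" by auto
      have cnt: "{y\<in>Y. S \<inter> F \<subseteq> y} = {y. y \<subseteq> F \<and> card y = t \<and> S \<inter> F \<subseteq> y}" unfolding Y_def by auto
      have cf: "real (card {y\<in>Y. S \<inter> F \<subseteq> y}) * poly (Qp (k S)) (real D) = real (D choose t) * poly (Qp (k S)) (real t)"
        unfolding cnt Qp_poly k_def D_def by (rule count_fall[OF finF TF]) (use tD D_def in simp)
      have kD: "k S \<le> D" unfolding k_def D_def using finF by (intro card_mono) auto
      have pos: "poly (Qp (k S)) (real D) \<noteq> 0" unfolding Qp_poly using kD by (auto simp: prod_zero_iff)
      have "real (card {y\<in>Y. S \<inter> F \<subseteq> y}) = real (D choose t) * poly (Qp (k S)) (real t) / poly (Qp (k S)) (real D)"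
        using cf pos by (simp add: field_simps)
      then show "c S * (if S \<subseteq> A \<union> F then 1 else 0) * real (card {y\<in>Y. S \<inter> F \<subseteq> y}) = real (D choose t) * (coef S * poly (Qp (k S)) (real t))"
        unfolding coef_def by (simp add: field_simps)
    qed
    also have "\<dots> = real (D choose t) * poly h (real t)"
      unfolding h_def by (simp add: poly_sum sum_distrib_left)
    finally show ?thesis unfolding Y_def .
  qed
  show ?thesis using degh key unfolding D_def by blast
qed



lemma layer_bound:
  assumes "finite Y" "Y \<noteq> {}" "\<forall>y\<in>Y. \<bar>g y\<bar> \<le> (1/3::real)"
    and "(\<Sum>y\<in>Y. g y) = real (card Y) * v"
  shows "\<bar>v\<bar> \<le> 1/3"
proof -
  have cY: "0 < real (card Y)" using assms(1,2) by (simp add: card_gt_0_iff)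
  have "real (card Y) * \<bar>v\<bar> = \<bar>\<Sum>y\<in>Y. g y\<bar>" using assms(4) cY by (simp add: abs_mult)
  also have "\<dots> \<le> (\<Sum>y\<in>Y. \<bar>g y\<bar>)" by (rule sum_abs)
  also have "\<dots> \<le> (\<Sum>y\<in>Y. 1/3)" using assms(3) by (intro sum_mono) auto
  also have "\<dots> = real (card Y) * (1/3)" by simp
  finally show ?thesis using cY by (simp add: mult_le_cancel_left_pos)
qed

lemma layer_card: "finite F \<Longrightarrow> card {y. y \<subseteq> F \<and> card y = t} = card F choose t"
  by (rule n_subsets)

lemma layer_ne: "finite F \<Longrightarrow> t \<le> card F \<Longrightarrow> {y. y \<subseteq> F \<and> card y = t} \<noteq> {}"
  using layer_card[of F t] by (metis card.empty zero_less_binomial_iff not_gr_zero)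

lemma layer_top: assumes "finite F" shows "{y. y \<subseteq> F \<and> card y = card F} = {F}"
proof (rule set_eqI, rule iffI)
  fix y assume "y \<in> {y. y \<subseteq> F \<and> card y = card F}"
  then show "y \<in> {F}" using card_subset_eq[OF assms] by auto
qed auto

lemma layer_bot: "finite F \<Longrightarrow> {y. y \<subseteq> F \<and> card y = 0} = {{}}"
  by (auto dest: finite_subset)

lemma core_top:
  assumes AF: "A \<inter> F = {}" "A \<union> F \<subseteq> {..<n}"
    and pd: "poly_deg_le n d p"
    and small: "\<forall>y. y \<subseteq> F \<and> y \<noteq> F \<longrightarrow> \<bar>p (A \<union> y)\<bar> \<le> 1/3"
    and big: "1 \<le> \<bar>p (A \<union> F)\<bar>"
  shows "card F \<le> 200 * (Suc d)^2"
proof (rule ccontr)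
  assume "\<not> ?thesis"
  then have D: "200 * (Suc d)^2 \<le> card F - 1" by simp
  have "200 \<le> 200 * (Suc d)^2" by simp
  then have F200: "200 \<le> card F - 1" using D by linarith
  have finF: "finite F" using AF(2) finite_subset by blast
  obtain h :: "real poly" where h: "degree h \<le> d"
    "\<forall>t\<le>card F. (\<Sum>y\<in>{y. y \<subseteq> F \<and> card y = t}. p (A \<union> y)) = real (card F choose t) * poly h (real t)"
    using sym_poly[OF AF pd] by blast
  have b: "\<forall>t\<le>card F - 1. \<bar>poly h (real t)\<bar> \<le> 1/3"
  proof (intro allI impI)
    fix t assume t: "t \<le> card F - 1"
    have tF: "t < card F" using t F200 by simp
    show "\<bar>poly h (real t)\<bar> \<le> 1/3"
    proof (rule layer_bound)
      show "finite {y. y \<subseteq> F \<and> card y = t}" using finF by simp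
      show "{y. y \<subseteq> F \<and> card y = t} \<noteq> {}" using layer_ne[OF finF] tF by simp
      show "\<forall>y\<in>{y. y \<subseteq> F \<and> card y = t}. \<bar>p (A \<union> y)\<bar> \<le> 1/3" using small tF by auto
      show "(\<Sum>y\<in>{y. y \<subseteq> F \<and> card y = t}. p (A \<union> y)) = real (card {y. y \<subseteq> F \<and> card y = t}) * poly h (real t)"
        using h(2) tF layer_card[OF finF] by simp
    qed
  qed
  have "\<bar>poly h (real (card F - 1) + 1)\<bar> < 1"
    by (rule univ[of "Suc d" h "card F - 1"]) (use h(1) D b in auto)
  moreover have "real (card F - 1) + 1 = real (card F)" using F200 by simp
  moreover have "poly h (real (card F)) = p (A \<union> F)"
    using h(2)[rule_format, of "card F"] layer_top[OF finF] by simp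
  ultimately show False using big by simp
qed

lemma core_bot:
  assumes AF: "A \<inter> F = {}" "A \<union> F \<subseteq> {..<n}"
    and pd: "poly_deg_le n d p"
    and small: "\<forall>y. y \<subseteq> F \<and> y \<noteq> {} \<longrightarrow> \<bar>p (A \<union> y)\<bar> \<le> 1/3"
    and big: "1 \<le> \<bar>p A\<bar>"
  shows "card F \<le> 200 * (Suc d)^2"
proof (rule ccontr)
  assume "\<not> ?thesis"
  then have D: "200 * (Suc d)^2 \<le> card F - 1" by simp
  have "200 \<le> 200 * (Suc d)^2" by simp
  then have F200: "200 \<le> card F - 1" using D by linarith
  have finF: "finite F" using AF(2) finite_subset by blast
  obtain h :: "real poly" where h: "degree h \<le> d"
    "\<forall>t\<le>card F. (\<Sum>y\<in>{y. y \<subseteq> F \<and> card y = t}. p (A \<union> y)) = real (card F choose t) * poly h (real t)"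
    using sym_poly[OF AF pd] by blast
  define h' where "h' = pcompose h [:real (card F), -1:]"
  have degh': "degree h' \<le> d" unfolding h'_def degree_pcompose
    using h(1) by (simp add: degree_pCons_eq_if)
  have polyh': "poly h' u = poly h (real (card F) - u)" for u
    unfolding h'_def by (simp add: poly_pcompose)
  have b: "\<forall>t\<le>card F - 1. \<bar>poly h' (real t)\<bar> \<le> 1/3"
  proof (intro allI impI)
    fix u assume u: "u \<le> card F - 1"
    define t where "t = card F - u"
    have tF: "t \<le> card F" "1 \<le> t" using u F200 unfolding t_def by auto
    have tr: "real t = real (card F) - real u" using u F200 unfolding t_def by simp
    have "\<bar>poly h (real t)\<bar> \<le> 1/3"
    proof (rule layer_bound)
      show "finite {y. y \<subseteq> F \<and> card y = t}" using finF by simp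
      show "{y. y \<subseteq> F \<and> card y = t} \<noteq> {}" using layer_ne[OF finF] tF by simp
      show "\<forall>y\<in>{y. y \<subseteq> F \<and> card y = t}. \<bar>p (A \<union> y)\<bar> \<le> 1/3" using small tF by auto
      show "(\<Sum>y\<in>{y. y \<subseteq> F \<and> card y = t}. p (A \<union> y)) = real (card {y. y \<subseteq> F \<and> card y = t}) * poly h (real t)"
        using h(2) tF layer_card[OF finF] by simp
    qed
    then show "\<bar>poly h' (real u)\<bar> \<le> 1/3" unfolding polyh' tr .
  qed
  have "\<bar>poly h' (real (card F - 1) + 1)\<bar> < 1"
    by (rule univ[of "Suc d" h' "card F - 1"]) (use degh' D b in auto)
  moreover have "real (card F - 1) + 1 = real (card F)" using F200 by simp
  moreover have "poly h 0 = p A"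
    using h(2)[rule_format, of 0] layer_bot[OF finF] by simp
  ultimately show False using big by (simp add: polyh')
qed



definition ext :: "nat set \<Rightarrow> nat list \<Rightarrow> nat set list" where
  "ext A es = map (\<lambda>i. A \<union> set (take i es)) [0..<Suc (length es)]"

definition alt_ext :: "(nat set \<Rightarrow> bool) \<Rightarrow> nat set \<Rightarrow> nat list \<Rightarrow> nat" where
  "alt_ext f A es = card {i. i < length es \<and> f (A \<union> set (take i es)) \<noteq> f (A \<union> set (take (Suc i) es))}"

lemma ext_len: "length (ext A es) = Suc (length es)"
  by (simp add: ext_def)

lemma ext_nth: "i \<le> length es \<Longrightarrow> ext A es ! i = A \<union> set (take i es)"
  unfolding ext_def by (simp del: upt_Suc)

lemma alt_num_ext: "alt_num f (ext A es) = alt_ext f A es"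
proof -
  have "{i. Suc i < length (ext A es) \<and> f (ext A es ! i) \<noteq> f (ext A es ! Suc i)}
      = {i. i < length es \<and> f (A \<union> set (take i es)) \<noteq> f (A \<union> set (take (Suc i) es))}"
    by (auto simp: ext_len ext_nth)
  then show ?thesis unfolding alt_num_def alt_ext_def by simp
qed

lemma mono_path_ext:
  assumes "distinct es" "set es = {..<n}"
  shows "mono_path n (ext {} es)"
  unfolding mono_path_def
proof (intro conjI allI impI)
  show "ext {} es \<noteq> []" using ext_len[of "{}" es] by auto
  have ne: "ext {} es \<noteq> []" using ext_len[of "{}" es] by auto
  show "hd (ext {} es) = {}" using ext_nth[of 0 es "{}"] hd_conv_nth[OF ne] by simp
  show "last (ext {} es) = {..<n}" using ext_nth[of "length es" es "{}"] ext_len[of "{}" es] assms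
      last_conv_nth[OF ne] by simp
  fix i assume "Suc i < length (ext {} es)"
  then have i: "i < length es" by (simp add: ext_len)
  have "es ! i \<notin> set (take i es)"
  proof
    assume "es ! i \<in> set (take i es)"
    then obtain j where "j < length (take i es)" "take i es ! j = es ! i" by (auto simp: in_set_conv_nth)
    then have "j < i" "es ! j = es ! i" using i by auto
    then show False using assms(1) i nth_eq_iff_index_eq by fastforce
  qed
  moreover have "es ! i < n" using assms(2) i nth_mem by blast
  moreover have "set (take (Suc i) es) = insert (es ! i) (set (take i es))"
    using i by (simp add: take_Suc_conv_app_nth)
  ultimately show "\<exists>a. a < n \<and> a \<notin> ext {} es ! i \<and> ext {} es ! Suc i = insert a (ext {} es ! i)"
    using i by (auto simp: ext_nth)
qed

lemma alt_ext_append: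
  "alt_ext f A (es @ fs) = alt_ext f A es + alt_ext f (A \<union> set es) fs"
proof -
  define P where "P i \<longleftrightarrow> f (A \<union> set (take i (es @ fs))) \<noteq> f (A \<union> set (take (Suc i) (es @ fs)))" for i
  define Q where "Q j \<longleftrightarrow> f (A \<union> set es \<union> set (take j fs)) \<noteq> f (A \<union> set es \<union> set (take (Suc j) fs))" for j
  have set_eq: "{i. i < length (es @ fs) \<and> P i}
     = {i. i < length es \<and> P i} \<union> (\<lambda>j. length es + j) ` {j. j < length fs \<and> P (length es + j)}"
  proof (rule set_eqI, rule iffI)
    fix i assume i: "i \<in> {i. i < length (es @ fs) \<and> P i}"
    show "i \<in> {i. i < length es \<and> P i} \<union> (\<lambda>j. length es + j) ` {j. j < length fs \<and> P (length es + j)}"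
    proof (cases "i < length es")
      case True then show ?thesis using i by simp
    next
      case False
      then have e: "i = length es + (i - length es)" by simp
      have "i - length es \<in> {j. j < length fs \<and> P (length es + j)}" using i False e by auto
      then show ?thesis by (subst e) (rule UnI2, rule imageI)
    qed
  qed auto
  have P1: "P i \<longleftrightarrow> f (A \<union> set (take i es)) \<noteq> f (A \<union> set (take (Suc i) es))" if "i < length es" for i
    using that unfolding P_def by (simp add: take_append)
  have P2: "P (length es + j) \<longleftrightarrow> Q j" for j
    unfolding P_def Q_def by (simp add: take_append Un_assoc)
  have "alt_ext f A (es @ fs) = card ({i. i < length es \<and> P i} \<union> (\<lambda>j. length es + j) ` {j. j < length fs \<and> P (length es + j)})"
    unfolding alt_ext_def P_def[symmetric] set_eq ..
  also have "\<dots> = card {i. i < length es \<and> P i} + card ((\<lambda>j. length es + j) ` {j. j < length fs \<and> P (length es + j)})"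
    by (rule card_Un_disjoint) auto
  also have "{i. i < length es \<and> P i} = {i. i < length es \<and> f (A \<union> set (take i es)) \<noteq> f (A \<union> set (take (Suc i) es))}"
    using P1 by blast
  also have "card \<dots> = alt_ext f A es" unfolding alt_ext_def ..
  also have "card ((\<lambda>j. length es + j) ` {j. j < length fs \<and> P (length es + j)}) = card {j. j < length fs \<and> Q j}"
    by (subst card_image) (auto simp: inj_on_def P2)
  also have "card {j. j < length fs \<and> Q j} = alt_ext f (A \<union> set es) fs"
    unfolding alt_ext_def Q_def ..
  finally show ?thesis .
qed

lemma alt_ext_single: "alt_ext f B [e] = (if f B \<noteq> f (insert e B) then 1 else 0)"
proof -
  have "{i. i < length [e] \<and> f (B \<union> set (take i [e])) \<noteq> f (B \<union> set (take (Suc i) [e]))}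
        = (if f B \<noteq> f (insert e B) then {0} else {})" by auto
  then show ?thesis unfolding alt_ext_def by simp
qed

lemma alt_ext_parity: "f A = f (A \<union> set es) \<longleftrightarrow> even (alt_ext f A es)"
proof (induction es rule: rev_induct)
  case Nil
  then show ?case by (simp add: alt_ext_def)
next
  case (snoc e es)
  have "alt_ext f A (es @ [e]) = alt_ext f A es + (if f (A \<union> set es) \<noteq> f (insert e (A \<union> set es)) then 1 else 0)"
    by (simp add: alt_ext_append alt_ext_single)
  then show ?case using snoc by auto
qed

definition pot :: "(nat set \<Rightarrow> bool) \<Rightarrow> nat set \<Rightarrow> nat" where
  "pot f x = alt_ext f {} (sorted_list_of_set x)"

lemma pot_wd:
  assumes z: "zebra n f" and x: "x \<subseteq> {..<n}" and es: "distinct es" "set es = x"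
  shows "alt_ext f {} es = pot f x"
proof -
  have finx: "finite x" using x finite_subset by blast
  define r where "r = sorted_list_of_set ({..<n} - x)"
  have r: "distinct r" "set r = {..<n} - x" unfolding r_def by auto
  have m1: "mono_path n (ext {} (es @ r))" using es r x by (intro mono_path_ext) auto
  have m2: "mono_path n (ext {} (sorted_list_of_set x @ r))" using finx r x by (intro mono_path_ext) auto
  have "alt_num f (ext {} (es @ r)) = alt_num f (ext {} (sorted_list_of_set x @ r))"
    using z m1 m2 unfolding zebra_def by blast
  then have "alt_ext f {} es + alt_ext f x r = alt_ext f {} (sorted_list_of_set x) + alt_ext f x r"
    unfolding alt_num_ext alt_ext_append using es finx by simp
  then show ?thesis unfolding pot_def by simp
qed

lemma pot_mono:
  assumes z: "zebra n f" and "y \<subseteq> x" "x \<subseteq> {..<n}"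
  shows "pot f y \<le> pot f x"
proof -
  have finx: "finite x" by (rule finite_subset[OF assms(3)]) simp
  have finy: "finite y" by (rule finite_subset[OF assms(2) finx])
  define es where "es = sorted_list_of_set y @ sorted_list_of_set (x - y)"
  have finxy: "finite (x - y)" using finx by simp
  have d: "distinct es" unfolding es_def using finy finxy by simp
  have s: "set es = x" unfolding es_def using finy finxy assms(2) by auto
  have "pot f x = alt_ext f {} es" by (rule pot_wd[OF z assms(3) d s, symmetric])
  also have "\<dots> = pot f y + alt_ext f y (sorted_list_of_set (x - y))"
    unfolding es_def alt_ext_append pot_def using finy by simp
  finally show ?thesis by simp
qed

lemma pot_step:
  assumes z: "zebra n f" and "x \<subseteq> {..<n}" "i < n"
  shows "pot f (insert i x) \<le> pot f x + 1"
proof (cases "i \<in> x")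
  case True
  then show ?thesis by (simp add: insert_absorb)
next
  case False
  have finx: "finite x" by (rule finite_subset[OF assms(2)]) simp
  define es where "es = sorted_list_of_set x @ [i]"
  have d: "distinct es" unfolding es_def using finx False by simp
  have s: "set es = insert i x" unfolding es_def using finx by simp
  have ix: "insert i x \<subseteq> {..<n}" using assms by simp
  have "pot f (insert i x) = alt_ext f {} es" by (rule pot_wd[OF z ix d s, symmetric])
  also have "\<dots> = pot f x + alt_ext f x [i]"
    unfolding es_def alt_ext_append pot_def using finx by simp
  finally have e: "pot f (insert i x) = pot f x + alt_ext f x [i]" .
  have "alt_ext f x [i] \<le> 1" by (simp add: alt_ext_single)
  then show ?thesis using e by simp
qed

lemma pot_parity:
  assumes "finite x" shows "f x = f {} \<longleftrightarrow> even (pot f x)"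
  using alt_ext_parity[of f "{}" "sorted_list_of_set x"] assms unfolding pot_def by auto

lemma alt_pot:
  assumes z: "zebra n f"
  shows "alt n f = pot f {..<n}"
proof -
  have mp: "mono_path n (ext {} (sorted_list_of_set {..<n}))" by (intro mono_path_ext) auto
  have "{alt_num f xs | xs. mono_path n xs} = {pot f {..<n}}"
  proof (rule set_eqI, rule iffI)
    fix v assume "v \<in> {alt_num f xs | xs. mono_path n xs}"
    then obtain xs where xs: "mono_path n xs" "v = alt_num f xs" by auto
    then have "v = alt_num f (ext {} (sorted_list_of_set {..<n}))" using z mp unfolding zebra_def by blast
    then show "v \<in> {pot f {..<n}}" by (simp add: alt_num_ext pot_def)
  next
    fix v assume "v \<in> {pot f {..<n}}"
    then show "v \<in> {alt_num f xs | xs. mono_path n xs}"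
    proof -
      have "pot f {..<n} = alt_num f (ext {} (sorted_list_of_set {..<n}))" by (simp add: alt_num_ext pot_def)
      then show ?thesis using \<open>v \<in> {pot f {..<n}}\<close> mp by blast
    qed
  qed
  then show ?thesis unfolding alt_def by simp
qed



lemma all_rep: fixes G :: "nat set \<Rightarrow> real" shows "poly_deg_le n n G"
proof -
  define H where "H S = (\<Sum>T\<in>Pow S. (-1)^card T * G T)" for S
  define c where "c T = (-1)^card T * H T" for T
  have Gc: "G x = (\<Sum>T\<in>Pow x. c T)" if "finite x" for x
    using inclusion_exclusion_symmetric[of H G x] that unfolding c_def H_def by simp
  have "\<forall>x\<in>cube n. G x = (\<Sum>S\<in>{S. S \<subseteq> {..<n} \<and> card S \<le> n}. c S * (\<Prod>i\<in>S. if i \<in> x then 1 else 0))"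
  proof
    fix x assume x: "x \<in> cube n"
    then have xn: "x \<subseteq> {..<n}" by (simp add: cube_def)
    have SS: "{S. S \<subseteq> {..<n} \<and> card S \<le> n} = Pow {..<n}"
      using card_mono[of "{..<n}"] by auto
    have "(\<Sum>S\<in>{S. S \<subseteq> {..<n} \<and> card S \<le> n}. c S * (\<Prod>i\<in>S. if i \<in> x then 1 else 0))
        = (\<Sum>S\<in>Pow {..<n}. if S \<subseteq> x then c S else 0)"
      unfolding SS
    proof (rule sum.cong[OF refl])
      fix S assume "S \<in> Pow {..<n}"
      then have "finite S" using finite_subset by auto
      then show "c S * (\<Prod>i\<in>S. if i \<in> x then 1 else 0) = (if S \<subseteq> x then c S else 0)"
        by (simp add: prod_ind)
    qed
    also have "\<dots> = (\<Sum>S\<in>{S\<in>Pow {..<n}. S \<subseteq> x}. c S)"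
      by (rule sum.inter_filter[symmetric]) simp
    also have "{S\<in>Pow {..<n}. S \<subseteq> x} = Pow x" using xn by auto
    finally show "G x = (\<Sum>S\<in>{S. S \<subseteq> {..<n} \<and> card S \<le> n}. c S * (\<Prod>i\<in>S. if i \<in> x then 1 else 0))"
      using Gc[of x] xn finite_subset by auto
  qed
  then show ?thesis unfolding poly_deg_le_def by blast
qed

lemma Ndeg_wit:
  "\<exists>p. poly_deg_le n (Ndeg n g) p \<and>
      (\<forall>x\<in>cube n. (\<not> g x \<longrightarrow> \<bar>p x\<bar> \<le> 1/3) \<and> (g x \<longrightarrow> \<bar>p x\<bar> \<ge> 1))"
  unfolding Ndeg_def
proof (rule LeastI_ex)
  show "\<exists>d p. poly_deg_le n d p \<and> (\<forall>x\<in>cube n. (\<not> g x \<longrightarrow> \<bar>p x\<bar> \<le> 1/3) \<and> (g x \<longrightarrow> \<bar>p x\<bar> \<ge> 1))"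
    by (rule exI[of _ n], rule exI[of _ "\<lambda>x. if g x then 1 else 0"]) (simp add: all_rep)
qed

lemma Ndeg_pos:
  assumes "x \<in> cube n" "y \<in> cube n" "g x" "\<not> g y"
  shows "1 \<le> Ndeg n g"
proof (rule ccontr)
  assume "\<not> ?thesis"
  then have N0: "Ndeg n g = 0" by simp
  obtain p where p: "poly_deg_le n 0 p" "\<forall>x\<in>cube n. (\<not> g x \<longrightarrow> \<bar>p x\<bar> \<le> 1/3) \<and> (g x \<longrightarrow> \<bar>p x\<bar> \<ge> 1)"
    using Ndeg_wit[of n g] N0 by auto
  obtain c where c: "\<forall>z\<in>cube n. p z = (\<Sum>S\<in>{S. S \<subseteq> {..<n} \<and> card S \<le> 0}. c S * (\<Prod>i\<in>S. if i \<in> z then 1 else 0))"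
    using p(1) unfolding poly_deg_le_def by blast
  have e: "{S. S \<subseteq> {..<n} \<and> card S \<le> 0} = {{}}"
    by (auto dest: finite_subset)
  have "p x = c {}" "p y = c {}" using c assms(1,2) unfolding e by auto
  moreover have "\<bar>p x\<bar> \<ge> 1" "\<bar>p y\<bar> \<le> 1/3" using p(2) assms by auto
  ultimately show False by simp
qed



definition BB :: "nat \<Rightarrow> (nat set \<Rightarrow> bool) \<Rightarrow> nat" where
  "BB n f = 200 * (Suc (max (Ndeg n f) (Ndeg n (\<lambda>x. \<not> f x))))^2"

lemma block_top:
  assumes sub: "S' \<subseteq> S" "S \<subseteq> {..<n}"
    and const: "\<forall>z. S' \<subseteq> z \<and> z \<subseteq> S \<and> z \<noteq> S \<longrightarrow> f z = f S'"
    and diff: "f S \<noteq> f S'"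
  shows "card (S - S') \<le> BB n f"
proof -
  define F where "F = S - S'"
  have AF: "S' \<inter> F = {}" "S' \<union> F \<subseteq> {..<n}" using sub unfolding F_def by auto
  have top: "S' \<union> F = S" using sub unfolding F_def by auto
  have pts: "f (S' \<union> y) = f S'" if "y \<subseteq> F" "y \<noteq> F" for y
  proof -
    have "S' \<union> y \<noteq> S" using that sub unfolding F_def by auto
    then show ?thesis using const that sub unfolding F_def by auto
  qed
  have cub: "S' \<union> y \<in> cube n" if "y \<subseteq> F" for y using that AF unfolding cube_def by auto
  have Scube: "S \<in> cube n" using sub unfolding cube_def by auto
  show ?thesis
  proof (cases "f S")
    case True
    obtain p where p: "poly_deg_le n (Ndeg n f) p"
      "\<forall>x\<in>cube n. (\<not> f x \<longrightarrow> \<bar>p x\<bar> \<le> 1/3) \<and> (f x \<longrightarrow> \<bar>p x\<bar> \<ge> 1)"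
      using Ndeg_wit[of n f] by blast
    have "card F \<le> 200 * (Suc (Ndeg n f))^2"
    proof (rule core_top[OF AF p(1)])
      show "\<forall>y. y \<subseteq> F \<and> y \<noteq> F \<longrightarrow> \<bar>p (S' \<union> y)\<bar> \<le> 1/3"
        using p(2) pts cub True diff by auto
      show "1 \<le> \<bar>p (S' \<union> F)\<bar>" using p(2) Scube True top by auto
    qed
    also have "\<dots> \<le> BB n f" unfolding BB_def by (simp add: power_mono)
    finally show ?thesis unfolding F_def .
  next
    case False
    obtain p where p: "poly_deg_le n (Ndeg n (\<lambda>x. \<not> f x)) p"
      "\<forall>x\<in>cube n. (\<not> \<not> f x \<longrightarrow> \<bar>p x\<bar> \<le> 1/3) \<and> (\<not> f x \<longrightarrow> \<bar>p x\<bar> \<ge> 1)"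
      using Ndeg_wit[of n "\<lambda>x. \<not> f x"] by blast
    have "card F \<le> 200 * (Suc (Ndeg n (\<lambda>x. \<not> f x)))^2"
    proof (rule core_top[OF AF p(1)])
      show "\<forall>y. y \<subseteq> F \<and> y \<noteq> F \<longrightarrow> \<bar>p (S' \<union> y)\<bar> \<le> 1/3"
        using p(2) pts cub False diff by auto
      show "1 \<le> \<bar>p (S' \<union> F)\<bar>" using p(2) Scube False top by auto
    qed
    also have "\<dots> \<le> BB n f" unfolding BB_def by (simp add: power_mono)
    finally show ?thesis unfolding F_def .
  qed
qed

lemma block_bot:
  assumes sub: "W \<subseteq> W'" "W' \<subseteq> {..<n}"
    and const: "\<forall>z. W \<subseteq> z \<and> z \<subseteq> W' \<and> z \<noteq> W \<longrightarrow> f z = f W'"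
    and diff: "f W \<noteq> f W'"
  shows "card (W' - W) \<le> BB n f"
proof -
  define F where "F = W' - W"
  have AF: "W \<inter> F = {}" "W \<union> F \<subseteq> {..<n}" using sub unfolding F_def by auto
  have pts: "f (W \<union> y) = f W'" if "y \<subseteq> F" "y \<noteq> {}" for y
  proof -
    have "W \<union> y \<noteq> W" using that sub unfolding F_def by auto
    then show ?thesis using const that sub unfolding F_def by auto
  qed
  have cub: "W \<union> y \<in> cube n" if "y \<subseteq> F" for y using that AF unfolding cube_def by auto
  have Wcube: "W \<in> cube n" using sub unfolding cube_def by auto
  show ?thesis
  proof (cases "f W")
    case True
    obtain p where p: "poly_deg_le n (Ndeg n f) p"
      "\<forall>x\<in>cube n. (\<not> f x \<longrightarrow> \<bar>p x\<bar> \<le> 1/3) \<and> (f x \<longrightarrow> \<bar>p x\<bar> \<ge> 1)"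
      using Ndeg_wit[of n f] by blast
    have "card F \<le> 200 * (Suc (Ndeg n f))^2"
    proof (rule core_bot[OF AF p(1)])
      show "\<forall>y. y \<subseteq> F \<and> y \<noteq> {} \<longrightarrow> \<bar>p (W \<union> y)\<bar> \<le> 1/3"
        using p(2) pts cub True diff by auto
      show "1 \<le> \<bar>p W\<bar>" using p(2) Wcube True by auto
    qed
    also have "\<dots> \<le> BB n f" unfolding BB_def by (simp add: power_mono)
    finally show ?thesis unfolding F_def .
  next
    case False
    obtain p where p: "poly_deg_le n (Ndeg n (\<lambda>x. \<not> f x)) p"
      "\<forall>x\<in>cube n. (\<not> \<not> f x \<longrightarrow> \<bar>p x\<bar> \<le> 1/3) \<and> (\<not> f x \<longrightarrow> \<bar>p x\<bar> \<ge> 1)"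
      using Ndeg_wit[of n "\<lambda>x. \<not> f x"] by blast
    have "card F \<le> 200 * (Suc (Ndeg n (\<lambda>x. \<not> f x)))^2"
    proof (rule core_bot[OF AF p(1)])
      show "\<forall>y. y \<subseteq> F \<and> y \<noteq> {} \<longrightarrow> \<bar>p (W \<union> y)\<bar> \<le> 1/3"
        using p(2) pts cub False diff by auto
      show "1 \<le> \<bar>p W\<bar>" using p(2) Wcube False by auto
    qed
    also have "\<dots> \<le> BB n f" unfolding BB_def by (simp add: power_mono)
    finally show ?thesis unfolding F_def .
  qed
qed



lemma fin_sub: "S \<subseteq> {..<(n::nat)} \<Longrightarrow> finite S"
  by (rule finite_subset) auto

lemma lower:
  assumes z: "zebra n f"
  shows "S \<subseteq> {..<n} \<Longrightarrow> (\<forall>S'. S' \<subseteq> S \<and> S' \<noteq> S \<longrightarrow> pot f S' < pot f S) \<Longrightarrow> card S \<le> pot f S * BB n f"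
proof (induction "pot f S" arbitrary: S rule: less_induct)
  case less
  show ?case
  proof (cases "S = {}")
    case True then show ?thesis by simp
  next
    case False
    then obtain i where i: "i \<in> S" by auto
    have finS: "finite S" using fin_sub[OF less.prems(1)] .
    have Sn: "S - {i} \<subseteq> {..<n}" "i < n" using less.prems(1) i by auto
    have ins: "insert i (S - {i}) = S" using i by auto
    have step: "pot f S \<le> pot f (S - {i}) + 1" using pot_step[OF z Sn] ins by simp
    have lt: "pot f (S - {i}) < pot f S" using less.prems(2) i by auto
    define w where "w = pot f S - 1"
    have vw: "pot f S = Suc w" unfolding w_def using lt by simp
    have wSi: "w \<le> pot f (S - {i})" using step vw by simp
    define Cand where "Cand = {S'. S' \<subseteq> S \<and> w \<le> pot f S'}"
    have finC: "finite Cand" unfolding Cand_def using finS by simp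
    have SiC: "S - {i} \<in> Cand" unfolding Cand_def using wSi by auto
    then have neC: "card ` Cand \<noteq> {}" by auto
    obtain S' where S'C: "S' \<in> Cand" and S'min: "card S' = Min (card ` Cand)"
      using Min_in[OF finite_imageI[OF finC] neC] by auto
    have minle: "card S' \<le> card T" if "T \<in> Cand" for T
      unfolding S'min by (rule Min_le[OF finite_imageI[OF finC] imageI[OF that]])
    have S'S: "S' \<subseteq> S" using S'C unfolding Cand_def by simp
    have "card S' \<le> card (S - {i})" using minle[OF SiC] .
    also have "card (S - {i}) < card S" by (rule card_Diff1_less[OF finS i])
    finally have S'ne: "S' \<noteq> S" by auto
    have "w \<le> pot f S'" using S'C unfolding Cand_def by simp
    moreover have "pot f S' < pot f S" using less.prems(2) S'S S'ne by blast
    ultimately have potS': "pot f S' = w" using vw by simp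
    have S'n: "S' \<subseteq> {..<n}" using S'S less.prems(1) by auto
    have minS': "\<forall>T. T \<subseteq> S' \<and> T \<noteq> S' \<longrightarrow> pot f T < pot f S'"
    proof (intro allI impI)
      fix T assume T: "T \<subseteq> S' \<and> T \<noteq> S'"
      have "finite S'" using fin_sub[OF S'n] .
      then have "card T < card S'" using T by (intro psubset_card_mono) auto
      have "T \<notin> Cand"
      proof
        assume "T \<in> Cand"
        from minle[OF this] \<open>card T < card S'\<close> show False by simp
      qed
      moreover have "T \<subseteq> S" using T S'S by blast
      ultimately show "pot f T < pot f S'" using potS' unfolding Cand_def by simp
    qed
    have "pot f S' < pot f S" using potS' vw by simp
    then have IH: "card S' \<le> pot f S' * BB n f" by (rule less.hyps[OF _ S'n minS'])
    have blk: "card (S - S') \<le> BB n f"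
    proof (rule block_top[OF S'S less.prems(1)])
      show "\<forall>z. S' \<subseteq> z \<and> z \<subseteq> S \<and> z \<noteq> S \<longrightarrow> f z = f S'"
      proof (intro allI impI)
        fix z assume zz: "S' \<subseteq> z \<and> z \<subseteq> S \<and> z \<noteq> S"
        have zn: "z \<subseteq> {..<n}" using zz less.prems(1) by auto
        have "pot f S' \<le> pot f z" using pot_mono[OF z _ zn] zz by simp
        moreover have "pot f z < pot f S" using less.prems(2) zz by simp
        ultimately have "pot f z = w" using potS' vw by simp
        then have "f z = f {} \<longleftrightarrow> even w" using pot_parity[OF fin_sub[OF zn], of f] by simp
        moreover have "f S' = f {} \<longleftrightarrow> even w" using pot_parity[OF fin_sub[OF S'n], of f] potS' by simp
        ultimately show "f z = f S'" by blast
      qed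
      have "f S = f {} \<longleftrightarrow> \<not> even w" using pot_parity[OF finS, of f] vw by simp
      moreover have "f S' = f {} \<longleftrightarrow> even w" using pot_parity[OF fin_sub[OF S'n], of f] potS' by simp
      ultimately show "f S \<noteq> f S'" by blast
    qed
    have "card S = card S' + card (S - S')"
      using card_Diff_subset[OF fin_sub[OF S'n] S'S] card_mono[OF finS S'S] by simp
    also have "\<dots> \<le> w * BB n f + BB n f" using IH blk potS' by simp
    also have "\<dots> = pot f S * BB n f" using vw by simp
    finally show ?thesis .
  qed
qed

lemma upper:
  assumes z: "zebra n f"
  shows "W \<subseteq> {..<n} \<Longrightarrow> (\<forall>W'. W \<subseteq> W' \<and> W' \<noteq> W \<and> W' \<subseteq> {..<n} \<longrightarrow> pot f W < pot f W') \<Longrightarrow>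
     card ({..<n} - W) \<le> (pot f {..<n} - pot f W) * BB n f"
proof (induction "card ({..<n} - W)" arbitrary: W rule: less_induct)
  case less
  show ?case
  proof (cases "W = {..<n}")
    case True then show ?thesis by simp
  next
    case False
    then obtain i where i: "i \<in> {..<n}" "i \<notin> W" using less.prems(1) by auto
    have finW: "finite W" using fin_sub[OF less.prems(1)] .
    have iW: "insert i W \<subseteq> {..<n}" using i less.prems(1) by auto
    have step: "pot f (insert i W) \<le> pot f W + 1" using pot_step[OF z less.prems(1)] i by simp
    have gt: "pot f W < pot f (insert i W)" using less.prems(2) i iW by auto
    define Cand where "Cand = {W'. W \<subseteq> W' \<and> W' \<subseteq> {..<n} \<and> pot f W' \<le> Suc (pot f W)}"
    have finC: "finite Cand" unfolding Cand_def by (rule finite_subset[of _ "Pow {..<n}"]) auto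
    have iC: "insert i W \<in> Cand" unfolding Cand_def using iW step by auto
    then have neC: "card ` Cand \<noteq> {}" by auto
    obtain W' where W'C: "W' \<in> Cand" and W'max: "card W' = Max (card ` Cand)"
      using Max_in[OF finite_imageI[OF finC] neC] by auto
    have maxle: "card T \<le> card W'" if "T \<in> Cand" for T
      unfolding W'max by (rule Max_ge[OF finite_imageI[OF finC] imageI[OF that]])
    have WW': "W \<subseteq> W'" "W' \<subseteq> {..<n}" using W'C unfolding Cand_def by auto
    have "card W < card (insert i W)" using finW i by simp
    also have "\<dots> \<le> card W'" using maxle[OF iC] .
    finally have W'ne: "W' \<noteq> W" by auto
    have "pot f W' \<le> Suc (pot f W)" using W'C unfolding Cand_def by simp
    moreover have "pot f W < pot f W'" using less.prems(2) WW' W'ne by blast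
    ultimately have potW': "pot f W' = Suc (pot f W)" by simp
    have maxW': "\<forall>T. W' \<subseteq> T \<and> T \<noteq> W' \<and> T \<subseteq> {..<n} \<longrightarrow> pot f W' < pot f T"
    proof (intro allI impI)
      fix T assume T: "W' \<subseteq> T \<and> T \<noteq> W' \<and> T \<subseteq> {..<n}"
      have "finite T" using T fin_sub[of T n] by simp
      then have "card W' < card T" using T by (intro psubset_card_mono) auto
      have "T \<notin> Cand"
      proof
        assume "T \<in> Cand"
        from maxle[OF this] \<open>card W' < card T\<close> show False by simp
      qed
      moreover have "W \<subseteq> T" using T WW' by blast
      ultimately show "pot f W' < pot f T" using potW' T unfolding Cand_def by simp
    qed
    have cardlt: "card ({..<n} - W') < card ({..<n} - W)"
    proof (rule psubset_card_mono)
      show "finite ({..<n} - W)" by simp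
      show "{..<n} - W' \<subset> {..<n} - W" using WW' W'ne by auto
    qed
    have IH: "card ({..<n} - W') \<le> (pot f {..<n} - pot f W') * BB n f"
      using less.hyps[OF cardlt WW'(2) maxW'] .
    have blk: "card (W' - W) \<le> BB n f"
    proof (rule block_bot[OF WW'])
      show "\<forall>z. W \<subseteq> z \<and> z \<subseteq> W' \<and> z \<noteq> W \<longrightarrow> f z = f W'"
      proof (intro allI impI)
        fix z assume zz: "W \<subseteq> z \<and> z \<subseteq> W' \<and> z \<noteq> W"
        have zn: "z \<subseteq> {..<n}" using zz WW' by auto
        have "pot f z \<le> pot f W'" using pot_mono[OF z _ WW'(2)] zz by simp
        moreover have "pot f W < pot f z" using less.prems(2) zz zn by simp
        ultimately have "pot f z = pot f W'" using potW' by simp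
        then have "f z = f {} \<longleftrightarrow> even (pot f W')" using pot_parity[OF fin_sub[OF zn], of f] by simp
        moreover have "f W' = f {} \<longleftrightarrow> even (pot f W')" using pot_parity[OF fin_sub[OF WW'(2)], of f] by simp
        ultimately show "f z = f W'" by blast
      qed
      have "f W = f {} \<longleftrightarrow> even (pot f W)" using pot_parity[OF finW, of f] by simp
      moreover have "f W' = f {} \<longleftrightarrow> \<not> even (pot f W)" using pot_parity[OF fin_sub[OF WW'(2)], of f] potW' by simp
      ultimately show "f W \<noteq> f W'" by blast
    qed
    have Kge: "pot f W' \<le> pot f {..<n}" using pot_mono[OF z WW'(2)] by simp
    have "card ({..<n} - W) = card ({..<n} - W') + card (W' - W)"
    proof -
      have "{..<n} - W = ({..<n} - W') \<union> (W' - W)" using WW' by auto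
      moreover have "finite (W' - W)" using fin_sub[OF WW'(2)] by simp
      moreover have "card (({..<n} - W') \<union> (W' - W)) = card ({..<n} - W') + card (W' - W)"
        using \<open>finite (W' - W)\<close> by (intro card_Un_disjoint) auto
      ultimately show ?thesis by simp
    qed
    also have "\<dots> \<le> (pot f {..<n} - pot f W') * BB n f + BB n f" using IH blk by simp
    also have "\<dots> = (pot f {..<n} - pot f W) * BB n f"
    proof -
      have e: "pot f {..<n} - pot f W = Suc (pot f {..<n} - pot f W')" using potW' Kge by simp
      show ?thesis unfolding e by simp
    qed
    finally show ?thesis .
  qed
qed



lemma cert_bound:
  assumes z: "zebra n f" and x: "x \<in> cube n"
  shows "cert_at n f x \<le> pot f {..<n} * BB n f"
proof -
  have xn: "x \<subseteq> {..<n}" using x by (simp add: cube_def)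
  have finx: "finite x" by (rule fin_sub[OF xn])
  define j where "j = pot f x"
  define CS where "CS = {S. S \<subseteq> x \<and> j \<le> pot f S}"
  have finCS: "finite CS" unfolding CS_def using finx by simp
  have xCS: "x \<in> CS" unfolding CS_def j_def by simp
  then have neCS: "card ` CS \<noteq> {}" by auto
  obtain S where SC: "S \<in> CS" and Smin: "card S = Min (card ` CS)"
    using Min_in[OF finite_imageI[OF finCS] neCS] by auto
  have minle: "card S \<le> card T" if "T \<in> CS" for T
    unfolding Smin by (rule Min_le[OF finite_imageI[OF finCS] imageI[OF that]])
  have Sx: "S \<subseteq> x" using SC unfolding CS_def by simp
  have Sn: "S \<subseteq> {..<n}" using Sx xn by simp
  have "pot f S \<le> j" unfolding j_def by (rule pot_mono[OF z Sx xn])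
  then have potS: "pot f S = j" using SC unfolding CS_def by simp
  have minS: "\<forall>T. T \<subseteq> S \<and> T \<noteq> S \<longrightarrow> pot f T < pot f S"
  proof (intro allI impI)
    fix T assume T: "T \<subseteq> S \<and> T \<noteq> S"
    have "card T < card S" using T fin_sub[OF Sn] by (intro psubset_card_mono) auto
    have "T \<notin> CS"
    proof
      assume "T \<in> CS"
      from minle[OF this] \<open>card T < card S\<close> show False by simp
    qed
    moreover have "T \<subseteq> x" using T Sx by blast
    ultimately show "pot f T < pot f S" using potS unfolding CS_def by simp
  qed
  have lowS: "card S \<le> j * BB n f" using lower[OF z Sn minS] potS by simp
  define CW where "CW = {W. x \<subseteq> W \<and> W \<subseteq> {..<n} \<and> pot f W \<le> j}"
  have finCW: "finite CW" unfolding CW_def by (rule finite_subset[of _ "Pow {..<n}"]) auto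
  have xCW: "x \<in> CW" unfolding CW_def j_def using xn by simp
  then have neCW: "card ` CW \<noteq> {}" by auto
  obtain W where WC: "W \<in> CW" and Wmax: "card W = Max (card ` CW)"
    using Max_in[OF finite_imageI[OF finCW] neCW] by auto
  have maxle: "card T \<le> card W" if "T \<in> CW" for T
    unfolding Wmax by (rule Max_ge[OF finite_imageI[OF finCW] imageI[OF that]])
  have xW: "x \<subseteq> W" and Wn: "W \<subseteq> {..<n}" using WC unfolding CW_def by auto
  have "j \<le> pot f W" unfolding j_def by (rule pot_mono[OF z xW Wn])
  then have potW: "pot f W = j" using WC unfolding CW_def by simp
  have maxW: "\<forall>T. W \<subseteq> T \<and> T \<noteq> W \<and> T \<subseteq> {..<n} \<longrightarrow> pot f W < pot f T"
  proof (intro allI impI)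
    fix T assume T: "W \<subseteq> T \<and> T \<noteq> W \<and> T \<subseteq> {..<n}"
    have "finite T" using T fin_sub[of T n] by simp
    then have "card W < card T" using T by (intro psubset_card_mono) auto
    have "T \<notin> CW"
    proof
      assume "T \<in> CW"
      from maxle[OF this] \<open>card W < card T\<close> show False by simp
    qed
    moreover have "x \<subseteq> T" using T xW by blast
    ultimately show "pot f W < pot f T" using potW T unfolding CW_def by simp
  qed
  have upW: "card ({..<n} - W) \<le> (pot f {..<n} - j) * BB n f" using upper[OF z Wn maxW] potW by simp
  define C where "C = S \<union> ({..<n} - W)"
  have Cn: "C \<subseteq> {..<n}" unfolding C_def using Sn by auto
  have certC: "\<forall>y\<in>cube n. (\<forall>i\<in>C. (i \<in> y \<longleftrightarrow> i \<in> x)) \<longrightarrow> f y = f x"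
  proof (intro ballI impI)
    fix y assume y: "y \<in> cube n" and agree: "\<forall>i\<in>C. (i \<in> y \<longleftrightarrow> i \<in> x)"
    have yn: "y \<subseteq> {..<n}" using y by (simp add: cube_def)
    have Sy: "S \<subseteq> y" using agree Sx unfolding C_def by blast
    have yW: "y \<subseteq> W"
    proof
      fix i assume iy: "i \<in> y"
      show "i \<in> W"
      proof (rule ccontr)
        assume "i \<notin> W"
        then have "i \<in> C" unfolding C_def using iy yn by auto
        then have "i \<in> x" using agree iy by blast
        then show False using xW \<open>i \<notin> W\<close> by blast
      qed
    qed
    have "pot f S \<le> pot f y" by (rule pot_mono[OF z Sy yn])
    moreover have "pot f y \<le> pot f W" by (rule pot_mono[OF z yW Wn])
    ultimately have "pot f y = j" using potS potW by simp
    then have "f y = f {} \<longleftrightarrow> even j" using pot_parity[OF fin_sub[OF yn], of f] by simp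
    moreover have "f x = f {} \<longleftrightarrow> even j" using pot_parity[OF finx, of f] unfolding j_def by simp
    ultimately show "f y = f x" by blast
  qed
  have "cert_at n f x \<le> card C"
    unfolding cert_at_def by (rule Least_le) (use Cn certC in blast)
  also have "\<dots> \<le> card S + card ({..<n} - W)" unfolding C_def by (rule card_Un_le)
  also have "\<dots> \<le> j * BB n f + (pot f {..<n} - j) * BB n f" using lowS upW by simp
  also have "\<dots> = pot f {..<n} * BB n f"
  proof -
    have "j \<le> pot f {..<n}" unfolding j_def by (rule pot_mono[OF z xn]) simp
    then show ?thesis by (simp add: add_mult_distrib[symmetric])
  qed
  finally show ?thesis .
qed

theorem theorem3p10:
  shows "\<exists>c::real. c > 0 \<and> (\<forall>(n::nat) (f::nat set \<Rightarrow> bool) (k::nat).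
     zebra n f \<and> (\<exists>x\<in>cube n. \<exists>y\<in>cube n. f x \<noteq> f y) \<and> k \<ge> 1 \<and> alt n f = k \<longrightarrow>
     real (cert n f) \<le> c * real (alt n f) *
        max ((real (Ndeg n f))\<^sup>2) ((real (Ndeg n (\<lambda>x. \<not> f x)))\<^sup>2))"
proof (intro exI[of _ 800] conjI allI impI)
  show "(0::real) < 800" by simp
  fix n f k
  assume H: "zebra n f \<and> (\<exists>x\<in>cube n. \<exists>y\<in>cube n. f x \<noteq> f y) \<and> k \<ge> 1 \<and> alt n f = k"
  then have z: "zebra n f" by blast
  from H obtain x y where xy: "x \<in> cube n" "y \<in> cube n" "f x \<noteq> f y" by blast
  have "\<exists>u v. u \<in> cube n \<and> v \<in> cube n \<and> f u \<and> \<not> f v"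
  proof (cases "f x")
    case True then show ?thesis using xy by blast
  next
    case False then show ?thesis using xy by blast
  qed
  then obtain u v where uv: "u \<in> cube n" "v \<in> cube n" "f u" "\<not> f v" by blast
  have N1: "1 \<le> Ndeg n f" by (rule Ndeg_pos[OF uv])
  define M where "M = max (Ndeg n f) (Ndeg n (\<lambda>x. \<not> f x))"
  have M1: "1 \<le> M" unfolding M_def using N1 by simp
  define K where "K = pot f {..<n}"
  have K: "alt n f = K" unfolding K_def by (rule alt_pot[OF z])
  have fin: "finite (cube n)" by (simp add: cube_def)
  have ne: "cube n \<noteq> {}" by (auto simp: cube_def)
  have "cert n f \<le> K * BB n f"
    unfolding cert_def K_def using cert_bound[OF z] fin ne by (simp add: Max_le_iff)
  moreover have "BB n f \<le> 800 * M^2"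
  proof -
    have "Suc M \<le> 2 * M" using M1 by simp
    then have "(Suc M)^2 \<le> (2 * M)^2" by (rule power_mono) simp
    then show ?thesis unfolding BB_def M_def[symmetric] by (simp add: power_mult_distrib)
  qed
  then have "K * BB n f \<le> K * (800 * M^2)" by (rule mult_le_mono2)
  ultimately have "cert n f \<le> K * (800 * M^2)" by (rule order_trans)
  then have "real (cert n f) \<le> real (K * (800 * M^2))" by (simp only: of_nat_le_iff)
  also have "real (K * (800 * M^2)) = real K * 800 * (real M)^2" by simp
  finally have cK: "real (cert n f) \<le> real K * 800 * (real M)^2" .
  have mx: "(real M)^2 = max ((real (Ndeg n f))\<^sup>2) ((real (Ndeg n (\<lambda>x. \<not> f x)))\<^sup>2)"
    unfolding M_def by (cases "Ndeg n f \<le> Ndeg n (\<lambda>x. \<not> f x)") (auto simp: max_def power_mono)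
  show "real (cert n f) \<le> 800 * real (alt n f) *
        max ((real (Ndeg n f))\<^sup>2) ((real (Ndeg n (\<lambda>x. \<not> f x)))\<^sup>2)"
    unfolding K mx[symmetric] using cK by (simp add: mult.commute)
qed


end
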